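(* If a finite simple graph $G$ with an even number of vertices is H$_2$--cordial, then the number of edges of $G$ is even.
   Context: For a positive integer $k$, an H$_k$--cordial labeling of a graph $G$ is a map $f:E(G)\to\mathbb{Z}$ such that, defining $f(v)=\sum_{e\in I(v)} f(e)$ for each vertex $v$ (where $I(v)$ is the set of edges incident to $v$), we have $1\le |f(e)|\le k$ for every edge $e$, $1\le |f(v)|\le k$ for every vertex $v$, and for each $i$ with $1\le i\le k$, $|e_f(i)-e_f(-i)|\le 1$ and $|v_f(i)-v_f(-i)|\le 1$; here $e_f(c)$ is the number of edges with label $c$ and $v_f(c)$ the number of vertices $v$ with $f(v)=c$. A graph is H$_k$--cordial if it admits an H$_k$--cordial labeling. *)

theory Defs
  imports Main
begin

definition simple_graph :: "'a set \<Rightarrow> 'a set set \<Rightarrow> bool" where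
  "simple_graph V E \<longleftrightarrow> finite V \<and> (\<forall>e\<in>E. e \<subseteq> V \<and> card e = 2)"

definition incident_edges :: "'a set set \<Rightarrow> 'a \<Rightarrow> 'a set set" where
  "incident_edges E v = {e \<in> E. v \<in> e}"

definition vertex_label :: "'a set set \<Rightarrow> ('a set \<Rightarrow> int) \<Rightarrow> 'a \<Rightarrow> int" where
  "vertex_label E f v = (\<Sum>e\<in>incident_edges E v. f e)"

definition edge_count :: "'a set set \<Rightarrow> ('a set \<Rightarrow> int) \<Rightarrow> int \<Rightarrow> nat" where
  "edge_count E f c = card {e \<in> E. f e = c}"

definition vertex_count :: "'a set \<Rightarrow> 'a set set \<Rightarrow> ('a set \<Rightarrow> int) \<Rightarrow> int \<Rightarrow> nat" where
  "vertex_count V E f c = card {v \<in> V. vertex_label E f v = c}"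

definition Hk_cordial_labeling :: "nat \<Rightarrow> 'a set \<Rightarrow> 'a set set \<Rightarrow> ('a set \<Rightarrow> int) \<Rightarrow> bool" where
  "Hk_cordial_labeling k V E f \<longleftrightarrow>
     (\<forall>e\<in>E. 1 \<le> \<bar>f e\<bar> \<and> \<bar>f e\<bar> \<le> int k) \<and>
     (\<forall>v\<in>V. 1 \<le> \<bar>vertex_label E f v\<bar> \<and> \<bar>vertex_label E f v\<bar> \<le> int k) \<and>
     (\<forall>i::int. 1 \<le> i \<and> i \<le> int k \<longrightarrow>
        \<bar>int (edge_count E f i) - int (edge_count E f (-i))\<bar> \<le> 1 \<and>
        \<bar>int (vertex_count V E f i) - int (vertex_count V E f (-i))\<bar> \<le> 1)"

definition Hk_cordial :: "nat \<Rightarrow> 'a set \<Rightarrow> 'a set set \<Rightarrow> bool" where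
  "Hk_cordial k V E \<longleftrightarrow> (\<exists>f. Hk_cordial_labeling k V E f)"

end

theory Submission
  imports Defs
begin

lemma card_filter_sum:
  assumes "finite S"
  shows "int (card {x\<in>S. P x}) = (\<Sum>x\<in>S. if P x then 1 else 0)"
proof -
  have "(\<Sum>x\<in>{x\<in>S. P x}. (1::int)) = (\<Sum>x\<in>S. if P x then 1 else 0)"
    by (rule sum.inter_filter[OF assms])
  then show ?thesis by simp
qed

lemma decomp:
  fixes g :: "'b \<Rightarrow> int"
  assumes "finite S" "\<forall>x\<in>S. 1 \<le> \<bar>g x\<bar> \<and> \<bar>g x\<bar> \<le> 2"
  shows "sum g S = int (card {x\<in>S. g x = 1}) - int (card {x\<in>S. g x = -1})
           + 2 * (int (card {x\<in>S. g x = 2}) - int (card {x\<in>S. g x = -2}))"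
    and "int (card S) = int (card {x\<in>S. g x = 1}) + int (card {x\<in>S. g x = -1})
           + int (card {x\<in>S. g x = 2}) + int (card {x\<in>S. g x = -2})"
proof -
  have pt: "\<And>x. x \<in> S \<Longrightarrow> g x = (if g x = 1 then 1 else 0) - (if g x = -1 then 1 else 0)
     + 2 * ((if g x = 2 then 1 else 0) - (if g x = -2 then 1 else 0))"
    using assms(2) by (auto simp: abs_if split: if_splits)
  have pt2: "\<And>x. x \<in> S \<Longrightarrow> (1::int) = (if g x = 1 then 1 else 0) + (if g x = -1 then 1 else 0)
     + (if g x = 2 then 1 else 0) + (if g x = -2 then 1 else 0)"
    using assms(2) by (auto simp: abs_if split: if_splits)
  have "sum g S = (\<Sum>x\<in>S. (if g x = 1 then 1 else 0) - (if g x = -1 then 1 else 0)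
     + 2 * ((if g x = 2 then 1 else 0) - (if g x = -2 then 1 else 0)))"
    using pt by (rule sum.cong[OF refl])
  then show "sum g S = int (card {x\<in>S. g x = 1}) - int (card {x\<in>S. g x = -1})
           + 2 * (int (card {x\<in>S. g x = 2}) - int (card {x\<in>S. g x = -2}))"
    using assms(1) by (simp add: card_filter_sum sum.distrib sum_subtractf sum_distrib_left)
  have "int (card S) = (\<Sum>x\<in>S. (1::int))" by simp
  also have "\<dots> = (\<Sum>x\<in>S. (if g x = 1 then 1 else 0) + (if g x = -1 then 1 else 0)
     + (if g x = 2 then 1 else 0) + (if g x = -2 then 1 else 0))"
    using pt2 by (rule sum.cong[OF refl])
  finally show "int (card S) = int (card {x\<in>S. g x = 1}) + int (card {x\<in>S. g x = -1})
           + int (card {x\<in>S. g x = 2}) + int (card {x\<in>S. g x = -2})"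
    using assms(1) by (simp add: card_filter_sum sum.distrib)
qed

lemma double_count:
  assumes "simple_graph V E"
  shows "(\<Sum>v\<in>V. vertex_label E f v) = 2 * sum f E"
proof -
  have fV: "finite V" and sub: "\<And>e. e \<in> E \<Longrightarrow> e \<subseteq> V" and c2: "\<And>e. e \<in> E \<Longrightarrow> card e = 2"
    using assms unfolding simple_graph_def by auto
  have fE: "finite E" using fV sub by (meson Pow_iff finite_Pow_iff rev_finite_subset subsetI)
  have "(\<Sum>v\<in>V. vertex_label E f v) = (\<Sum>v\<in>V. \<Sum>e\<in>{e\<in>E. v \<in> e}. f e)"
    by (simp add: vertex_label_def incident_edges_def)
  also have "\<dots> = (\<Sum>e\<in>E. \<Sum>v\<in>{v\<in>V. v \<in> e}. f e)"
    using sum.swap_restrict[OF fV fE, of "\<lambda>v e. f e" "\<lambda>v e. v \<in> e"] by simp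
  also have "\<dots> = (\<Sum>e\<in>E. 2 * f e)"
  proof (rule sum.cong[OF refl])
    fix e assume "e \<in> E"
    then have "{v\<in>V. v \<in> e} = e" using sub by auto
    then show "(\<Sum>v\<in>{v\<in>V. v \<in> e}. f e) = 2 * f e" using c2[OF \<open>e \<in> E\<close>] by simp
  qed
  finally show ?thesis by (simp add: sum_distrib_left)
qed

lemma arith1:
  fixes a b c d k s :: int
  assumes "2 * s = a - b + 2 * (c - d)" "2 * k = a + b + c + d" "\<bar>a - b\<bar> \<le> 1" "\<bar>c - d\<bar> \<le> 1"
  shows "s = 0"
proof -
  have "a = b" using assms(1,3) by presburger
  then have "c = d" using assms(2,4) by presburger
  then show ?thesis using assms(1) \<open>a = b\<close> by simp
qed

lemma arith2:
  fixes a b c d n :: int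
  assumes "0 = a - b + 2 * (c - d)" "n = a + b + c + d" "\<bar>a - b\<bar> \<le> 1" "\<bar>c - d\<bar> \<le> 1"
  shows "even n"
proof -
  have "a = b" using assms(1,3) by presburger
  then have "c = d" using assms(1) by simp
  then show ?thesis using assms(2) \<open>a = b\<close> by simp
qed

theorem lemma3:
  fixes V :: "'a set" and E :: "'a set set"
  assumes "simple_graph V E"
    and "even (card V)"
    and "Hk_cordial 2 V E"
  shows "even (card E)"
proof -
  obtain f where H: "Hk_cordial_labeling 2 V E f" using assms(3) Hk_cordial_def by blast
  have fV: "finite V" and sub: "\<And>e. e \<in> E \<Longrightarrow> e \<subseteq> V"
    using assms(1) unfolding simple_graph_def by auto
  have fE: "finite E" using fV sub by (meson Pow_iff finite_Pow_iff rev_finite_subset subsetI)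
  have eb: "\<forall>e\<in>E. 1 \<le> \<bar>f e\<bar> \<and> \<bar>f e\<bar> \<le> 2" using H unfolding Hk_cordial_labeling_def by simp
  have vb: "\<forall>v\<in>V. 1 \<le> \<bar>vertex_label E f v\<bar> \<and> \<bar>vertex_label E f v\<bar> \<le> 2"
    using H unfolding Hk_cordial_labeling_def by simp
  have c1: "\<bar>int (edge_count E f 1) - int (edge_count E f (-1))\<bar> \<le> 1 \<and>
        \<bar>int (vertex_count V E f 1) - int (vertex_count V E f (-1))\<bar> \<le> 1"
    using H unfolding Hk_cordial_labeling_def by (metis int_ops(2) order_refl one_le_numeral of_nat_numeral)
  have c2: "\<bar>int (edge_count E f 2) - int (edge_count E f (-2))\<bar> \<le> 1 \<and>
        \<bar>int (vertex_count V E f 2) - int (vertex_count V E f (-2))\<bar> \<le> 1"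
    using H unfolding Hk_cordial_labeling_def by (metis order_refl one_le_numeral of_nat_numeral)
  note dv = decomp[OF fV vb]
  note de = decomp[OF fE eb]
  have dc: "(\<Sum>v\<in>V. vertex_label E f v) = 2 * sum f E" by (rule double_count[OF assms(1)])
  obtain k where k: "int (card V) = 2 * k" using assms(2) by (metis evenE of_nat_mult of_nat_numeral)
  have "sum f E = 0"
    apply (rule arith1[of _ "int (card {x\<in>V. vertex_label E f x = 1})" "int (card {x\<in>V. vertex_label E f x = -1})"
      "int (card {x\<in>V. vertex_label E f x = 2})" "int (card {x\<in>V. vertex_label E f x = -2})" k])
    using dv dc k c1 c2 unfolding vertex_count_def by auto
  have "even (int (card E))"
    apply (rule arith2[of "int (card {x\<in>E. f x = 1})" "int (card {x\<in>E. f x = -1})"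
      "int (card {x\<in>E. f x = 2})" "int (card {x\<in>E. f x = -2})"])
    using \<open>sum f E = 0\<close> de c1 c2 unfolding edge_count_def by auto
  then show ?thesis by simp
qed

end
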